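(* Let $R$ be a commutative ring with $1\neq 0$, $S\subseteq R$ a multiplicatively closed subset, and $M$ a faithful $S$-strong comultiplication $R$-module. If $N$ is a submodule of $M$ with $N\ll^{S}M$, then there exist an ideal $I$ of $R$ with $I\leq^{S}_{e}R$ and $t\in S$ such that $t(0:_{M}I)\leq N\leq (0:_{M}I)$.
   Context: All rings are commutative with $1\neq 0$ and all modules are unital. A multiplicatively closed subset (m.c.s.) $S$ of $R$ is a subset with $0\notin S$, $1\in S$, and $ss'\in S$ for all $s,s'\in S$. For an ideal $I$ of $R$, $(0:_M I)=\{m\in M: Im=0\}$; $\mathrm{Ann}_R(X)=\{r\in R: rX=0\}$; $M$ is faithful if $\mathrm{Ann}_R(M)=0$. A submodule $N\leq M$ is $S$-small in $M$ ($N\ll^{S}M$) if for every submodule $L$ of $M$ and $s\in S$, $sM\leq N+L$ implies $tM\leq L$ for some $t\in S$. $N$ is $S$-essential in $M$ ($N\leq^{S}_{e}M$) if for every submodule $L$ of $M$ with $N\cap L=0$ there is $s\in S$ with $sL=0$; for ideals this is applied to $M=R$. $M$ is an $S$-comultiplication module if for each submodule $N$ of $M$ there exist $s\in S$ and an ideal $I$ of $R$ with $s(0:_M I)\subseteq N\subseteq (0:_M I)$. $M$ satisfies the $S$-double annihilator condition ($S$-DAC) if for each ideal $I$ of $R$ there is $s\in S$ with $s\,\mathrm{Ann}_R((0:_M I))\subseteq I$. $M$ is an $S$-strong comultiplication module if it is an $S$-comultiplication module satisfying the $S$-DAC. *)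

theory Defs
  imports Main "HOL.Modules"
begin

(* R is the ring type 'a :: comm_ring_1 (so 1 \<noteq> 0); the module M is the whole
   type 'b, with scalar multiplication scale, assumed to satisfy module scale. *)

definition mcs :: "'a::comm_ring_1 set \<Rightarrow> bool" where
  "mcs S \<longleftrightarrow> 0 \<notin> S \<and> 1 \<in> S \<and> (\<forall>s\<in>S. \<forall>s'\<in>S. s * s' \<in> S)"

definition is_ideal :: "'a::comm_ring_1 set \<Rightarrow> bool" where
  "is_ideal I \<longleftrightarrow> module.subspace ((*) :: 'a \<Rightarrow> 'a \<Rightarrow> 'a) I"

definition submod :: "('a::comm_ring_1 \<Rightarrow> 'b::ab_group_add \<Rightarrow> 'b) \<Rightarrow> 'b set \<Rightarrow> bool" where
  "submod scale N \<longleftrightarrow> module.subspace scale N"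

definition annM :: "('a::comm_ring_1 \<Rightarrow> 'b::ab_group_add \<Rightarrow> 'b) \<Rightarrow> 'a set \<Rightarrow> 'b set" where
  "annM scale I = {m. \<forall>r\<in>I. scale r m = 0}"

definition AnnR :: "('a::comm_ring_1 \<Rightarrow> 'b::ab_group_add \<Rightarrow> 'b) \<Rightarrow> 'b set \<Rightarrow> 'a set" where
  "AnnR scale X = {r. \<forall>x\<in>X. scale r x = 0}"

definition faithful :: "('a::comm_ring_1 \<Rightarrow> 'b::ab_group_add \<Rightarrow> 'b) \<Rightarrow> bool" where
  "faithful scale \<longleftrightarrow> AnnR scale UNIV = {0}"

definition smul_set :: "('a::comm_ring_1 \<Rightarrow> 'b::ab_group_add \<Rightarrow> 'b) \<Rightarrow> 'a \<Rightarrow> 'b set \<Rightarrow> 'b set" where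
  "smul_set scale s X = scale s ` X"

definition S_small :: "('a::comm_ring_1 \<Rightarrow> 'b::ab_group_add \<Rightarrow> 'b) \<Rightarrow> 'a set \<Rightarrow> 'b set \<Rightarrow> bool" where
  "S_small scale S N \<longleftrightarrow>
     (\<forall>L s. submod scale L \<longrightarrow> s \<in> S \<longrightarrow>
        smul_set scale s UNIV \<subseteq> {n + l | n l. n \<in> N \<and> l \<in> L} \<longrightarrow>
        (\<exists>t\<in>S. smul_set scale t UNIV \<subseteq> L))"

definition S_essential_ideal :: "'a::comm_ring_1 set \<Rightarrow> 'a set \<Rightarrow> bool" where
  "S_essential_ideal S I \<longleftrightarrow>
     (\<forall>L. is_ideal L \<longrightarrow> I \<inter> L = {0} \<longrightarrow> (\<exists>s\<in>S. \<forall>l\<in>L. s * l = 0))"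

definition S_comult :: "('a::comm_ring_1 \<Rightarrow> 'b::ab_group_add \<Rightarrow> 'b) \<Rightarrow> 'a set \<Rightarrow> bool" where
  "S_comult scale S \<longleftrightarrow>
     (\<forall>N. submod scale N \<longrightarrow>
        (\<exists>s\<in>S. \<exists>I. is_ideal I \<and> smul_set scale s (annM scale I) \<subseteq> N \<and> N \<subseteq> annM scale I))"

definition S_DAC :: "('a::comm_ring_1 \<Rightarrow> 'b::ab_group_add \<Rightarrow> 'b) \<Rightarrow> 'a set \<Rightarrow> bool" where
  "S_DAC scale S \<longleftrightarrow>
     (\<forall>I. is_ideal I \<longrightarrow> (\<exists>s\<in>S. (\<lambda>r. s * r) ` AnnR scale (annM scale I) \<subseteq> I))"

definition S_strong_comult :: "('a::comm_ring_1 \<Rightarrow> 'b::ab_group_add \<Rightarrow> 'b) \<Rightarrow> 'a set \<Rightarrow> bool" where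
  "S_strong_comult scale S \<longleftrightarrow> S_comult scale S \<and> S_DAC scale S"

end

theory Submission
  imports Defs
begin

lemma module_mult: "module ((*) :: 'a::comm_ring_1 \<Rightarrow> _)"
  by unfold_locales (auto simp: algebra_simps)

lemma ideal_iff: "is_ideal (I::'a::comm_ring_1 set) \<longleftrightarrow>
   0 \<in> I \<and> (\<forall>x\<in>I. \<forall>y\<in>I. x + y \<in> I) \<and> (\<forall>c. \<forall>x\<in>I. c * x \<in> I)"
  by (simp only: is_ideal_def module.subspace_def[OF module_mult])

lemma submod_iff: "module scale \<Longrightarrow> submod scale N \<longleftrightarrow>
   0 \<in> N \<and> (\<forall>x\<in>N. \<forall>y\<in>N. x + y \<in> N) \<and> (\<forall>c. \<forall>x\<in>N. scale c x \<in> N)"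
  by (simp only: submod_def module.subspace_def)

lemma annM_submod:
  assumes "module scale" shows "submod scale (annM scale I)"
proof -
  interpret module scale by fact
  show ?thesis unfolding submod_iff[OF assms]
  proof (intro conjI ballI allI)
    show "0 \<in> annM scale I" unfolding annM_def by simp
  next
    fix x y assume x: "x \<in> annM scale I" and y: "y \<in> annM scale I"
    show "x + y \<in> annM scale I" unfolding annM_def
    proof (intro CollectI ballI)
      fix r assume "r \<in> I"
      hence "scale r x = 0" "scale r y = 0" using x y unfolding annM_def by auto
      thus "scale r (x + y) = 0" by (simp only: scale_right_distrib) simp
    qed
  next
    fix c x assume x: "x \<in> annM scale I"
    show "scale c x \<in> annM scale I" unfolding annM_def
    proof (intro CollectI ballI)
      fix r assume "r \<in> I"
      hence "scale r x = 0" using x unfolding annM_def by auto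
      thus "scale r (scale c x) = 0" by (simp only: scale_left_commute[of r c x]) simp
    qed
  qed
qed

theorem proposition2p4:
  fixes scale :: "'a::comm_ring_1 \<Rightarrow> 'b::ab_group_add \<Rightarrow> 'b"
    and S :: "'a set" and N :: "'b set"
  assumes "module scale"
    and "mcs S"
    and "faithful scale"
    and "S_strong_comult scale S"
    and "submod scale N"
    and "S_small scale S N"
  shows "\<exists>I t. is_ideal I \<and> S_essential_ideal S I \<and> t \<in> S \<and>
           smul_set scale t (annM scale I) \<subseteq> N \<and> N \<subseteq> annM scale I"
proof -
  interpret module scale by fact
  have comult: "S_comult scale S" and dac: "S_DAC scale S"
    using assms(4) unfolding S_strong_comult_def by auto
  have mS: "\<And>a b. a \<in> S \<Longrightarrow> b \<in> S \<Longrightarrow> a * b \<in> S" using assms(2) unfolding mcs_def by auto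
  obtain s I where sS: "s \<in> S" and I: "is_ideal I"
    and sub1: "smul_set scale s (annM scale I) \<subseteq> N" and sub2: "N \<subseteq> annM scale I"
    using comult assms(5) unfolding S_comult_def by blast
  have "S_essential_ideal S I"
    unfolding S_essential_ideal_def
  proof (intro allI impI)
    fix L assume L: "is_ideal L" and IL: "I \<inter> L = {0}"
    define K where "K = {a + b | a b. a \<in> annM scale I \<and> b \<in> annM scale L}"
    have KI: "annM scale I \<subseteq> K" unfolding K_def annM_def by force
    have KL: "annM scale L \<subseteq> K"
    proof
      fix x assume "x \<in> annM scale L"
      moreover have "(0::'b) \<in> annM scale I" unfolding annM_def by simp
      moreover have "x = 0 + x" by simp
      ultimately show "x \<in> K" unfolding K_def by blast
    qed
    have "submod scale K"
      unfolding submod_iff[OF assms(1)]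
    proof (intro conjI ballI allI)
      show "0 \<in> K" using KI unfolding annM_def by auto
    next
      fix x y assume "x \<in> K" "y \<in> K"
      then obtain a b a' b' where "x = a + b" "y = a' + b'" "a \<in> annM scale I" "b \<in> annM scale L"
        "a' \<in> annM scale I" "b' \<in> annM scale L" unfolding K_def by blast
      moreover have "a + a' \<in> annM scale I" "b + b' \<in> annM scale L"
        using calculation annM_submod[OF assms(1)] unfolding submod_iff[OF assms(1)] by auto
      moreover have "x + y = (a + a') + (b + b')" using calculation by (simp add: ac_simps)
      ultimately show "x + y \<in> K" unfolding K_def by blast
    next
      fix c x assume "x \<in> K"
      then obtain a b where "x = a + b" "a \<in> annM scale I" "b \<in> annM scale L" unfolding K_def by blast
      moreover have "scale c a \<in> annM scale I" "scale c b \<in> annM scale L"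
        using calculation annM_submod[OF assms(1)] unfolding submod_iff[OF assms(1)] by auto
      ultimately show "scale c x \<in> K" unfolding K_def
        by (auto simp: scale_right_distrib)
    qed
    then obtain s' J where s'S: "s' \<in> S" and J: "is_ideal J"
      and K1: "smul_set scale s' (annM scale J) \<subseteq> K" and K2: "K \<subseteq> annM scale J"
      using comult unfolding S_comult_def by blast
    have JI: "J \<subseteq> AnnR scale (annM scale I)"
      using KI K2 unfolding AnnR_def annM_def by blast
    have JL: "J \<subseteq> AnnR scale (annM scale L)"
      using KL K2 unfolding AnnR_def annM_def by blast
    obtain s1 where s1S: "s1 \<in> S" and s1: "(\<lambda>r. s1 * r) ` AnnR scale (annM scale I) \<subseteq> I"
      using dac I unfolding S_DAC_def by blast
    obtain s2 where s2S: "s2 \<in> S" and s2: "(\<lambda>r. s2 * r) ` AnnR scale (annM scale L) \<subseteq> L"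
      using dac L unfolding S_DAC_def by blast
    have J0: "s1 * s2 * j = 0" if "j \<in> J" for j
    proof -
      have a: "s1 * j \<in> I" using s1 JI that by blast
      have b: "s2 * j \<in> L" using s2 JL that by blast
      have "s2 * (s1 * j) \<in> I" using a I unfolding ideal_iff by blast
      moreover have "s1 * (s2 * j) \<in> L" using b L unfolding ideal_iff by blast
      ultimately have "s1 * s2 * j \<in> I \<inter> L" by (simp add: ac_simps)
      thus ?thesis using IL by auto
    qed
    define u where "u = s * s' * (s1 * s2)"
    have uS: "u \<in> S" unfolding u_def using sS s'S s1S s2S mS by auto
    have "smul_set scale u UNIV \<subseteq> {n + l | n l. n \<in> N \<and> l \<in> annM scale L}"
    proof
      fix y assume "y \<in> smul_set scale u UNIV"
      then obtain m where y: "y = scale u m" unfolding smul_set_def by auto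
      have "scale (s1 * s2) m \<in> annM scale J"
        unfolding annM_def using J0 by (auto simp: mult.commute)
      hence "scale s' (scale (s1 * s2) m) \<in> K" using K1 unfolding smul_set_def by blast
      then obtain a b where ab: "scale s' (scale (s1 * s2) m) = a + b"
        "a \<in> annM scale I" "b \<in> annM scale L" unfolding K_def by blast
      have "y = scale s a + scale s b"
      proof -
        have "scale u m = scale s (scale s' (scale (s1 * s2) m))" unfolding u_def
          by (simp add: mult.assoc)
        thus ?thesis using ab(1) unfolding y by (simp add: scale_right_distrib del: scale_scale)
      qed
      moreover have "scale s a \<in> N" using sub1 ab(2) unfolding smul_set_def by blast
      moreover have "scale s b \<in> annM scale L"
        using ab(3) annM_submod[OF assms(1)] unfolding submod_iff[OF assms(1)] by auto
      ultimately show "y \<in> {n + l | n l. n \<in> N \<and> l \<in> annM scale L}" by blast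
    qed
    then obtain t where tS: "t \<in> S" and t: "smul_set scale t UNIV \<subseteq> annM scale L"
      using assms(6) uS annM_submod[OF assms(1)] unfolding S_small_def by blast
    have "\<forall>l\<in>L. t * l = 0"
    proof
      fix l assume "l \<in> L"
      have "t * l \<in> AnnR scale UNIV"
        unfolding AnnR_def
      proof (clarify)
        fix m
        have "scale t m \<in> annM scale L" using t unfolding smul_set_def by blast
        hence "scale l (scale t m) = 0" using \<open>l \<in> L\<close> unfolding annM_def by blast
        thus "scale (t * l) m = 0" by (simp add: mult.commute)
      qed
      thus "t * l = 0" using assms(3) unfolding faithful_def by blast
    qed
    thus "\<exists>s\<in>S. \<forall>l\<in>L. s * l = 0" using tS by blast
  qed
  then have "is_ideal I \<and> S_essential_ideal S I \<and> s \<in> S \<and>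
           smul_set scale s (annM scale I) \<subseteq> N \<and> N \<subseteq> annM scale I"
    using I sS sub1 sub2 by (intro conjI)
  then show ?thesis by (rule exI[of _ I, OF exI[of _ s]])
qed

end
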